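(* Let $X$ be a metrizable space which is locally compact and $\sigma$-compact, and let $f\colon X\to X$ be a homeomorphism which is metric-independent expansive. Then $f^n$ is metric-independent expansive for every integer $n\neq 0$.
   Context: A homeomorphism $f$ of a metric space $(X,d)$ is expansive with respect to $d$ if there is $c>0$ such that for all $x\neq y$ there is $i\in\mathbb Z$ with $d(f^i(x),f^i(y))>c$. It is metric-independent expansive if it is expansive with respect to every metric compatible with the topology of $X$. *)

theory Defs
  imports "HOL-Analysis.Analysis"
begin

definition compatible_metric :: "'a topology \<Rightarrow> ('a \<Rightarrow> 'a \<Rightarrow> real) \<Rightarrow> bool" where
  "compatible_metric X d \<longleftrightarrow>
     Metric_space (topspace X) d \<and> Metric_space.mtopology (topspace X) d = X"

definition sigma_compact_space :: "'a topology \<Rightarrow> bool" where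
  "sigma_compact_space X \<longleftrightarrow>
     (\<exists>F. countable F \<and> (\<forall>K\<in>F. compactin X K) \<and> \<Union>F = topspace X)"

definition iter_int :: "'a topology \<Rightarrow> ('a \<Rightarrow> 'a) \<Rightarrow> int \<Rightarrow> 'a \<Rightarrow> 'a" where
  "iter_int X f n =
     (if 0 \<le> n then f ^^ nat n else (inv_into (topspace X) f) ^^ nat (- n))"

definition expansive_wrt :: "'a topology \<Rightarrow> ('a \<Rightarrow> 'a) \<Rightarrow> ('a \<Rightarrow> 'a \<Rightarrow> real) \<Rightarrow> bool" where
  "expansive_wrt X f d \<longleftrightarrow>
     (\<exists>c>0. \<forall>x\<in>topspace X. \<forall>y\<in>topspace X. x \<noteq> y \<longrightarrow>
        (\<exists>i::int. d (iter_int X f i x) (iter_int X f i y) > c))"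

definition metric_independent_expansive :: "'a topology \<Rightarrow> ('a \<Rightarrow> 'a) \<Rightarrow> bool" where
  "metric_independent_expansive X f \<longleftrightarrow>
     (\<forall>d. compatible_metric X d \<longrightarrow> expansive_wrt X f d)"

end

theory Submission
  imports Defs
begin


locale homeo_ctx =
  fixes X :: "'a topology" and f :: "'a \<Rightarrow> 'a"
  assumes hm: "homeomorphic_map X X f"
begin

abbreviation "S \<equiv> topspace X"
abbreviation "g \<equiv> inv_into (topspace X) f"

lemma basic: "f ` S = S" "inj_on f S"
  using hm by (auto simp: homeomorphic_eq_everything_map)

lemma f_in: "x \<in> S \<Longrightarrow> f x \<in> S" using basic by blast
lemma g_in: "x \<in> S \<Longrightarrow> g x \<in> S" using basic by (metis inv_into_into)
lemma fg: "x \<in> S \<Longrightarrow> f (g x) = x" using basic by (metis f_inv_into_f)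
lemma gf: "x \<in> S \<Longrightarrow> g (f x) = x" using basic by (metis inv_into_f_f)

lemma fpow_in: "x \<in> S \<Longrightarrow> (f ^^ m) x \<in> S"
  by (induction m) (auto simp: f_in)
lemma gpow_in: "x \<in> S \<Longrightarrow> (g ^^ m) x \<in> S"
  by (induction m) (auto simp: g_in)

lemma it_in: "x \<in> S \<Longrightarrow> iter_int X f k x \<in> S"
  by (simp add: iter_int_def fpow_in gpow_in)

lemma it_zero: "iter_int X f 0 x = x"
  by (simp add: iter_int_def)

lemma it_succ: assumes "x \<in> S" shows "iter_int X f (k+1) x = f (iter_int X f k x)"
proof (cases "k \<ge> 0")
  case True
  then have "nat (k+1) = Suc (nat k)" by simp
  then show ?thesis using True by (simp add: iter_int_def)
next
  case False
  then have k1: "k + 1 \<le> 0" by simp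
  have "nat (-k) = Suc (nat (-(k+1)))" using False by simp
  then have "iter_int X f k x = g (iter_int X f (k+1) x)"
    using False k1 by (cases "k+1 = 0") (auto simp: iter_int_def)
  then show ?thesis using fg it_in assms by metis
qed

lemma it_pred: assumes "x \<in> S" shows "iter_int X f (k-1) x = g (iter_int X f k x)"
  using it_succ[OF assms, of "k-1"] gf it_in assms by simp

lemma it_add: assumes "x \<in> S" shows "iter_int X f a (iter_int X f b x) = iter_int X f (a+b) x"
proof (induction a rule: int_induct[where k=0])
  case base
  then show ?case by (simp add: it_zero)
next
  case (step1 i)
  have "iter_int X f (i+1) (iter_int X f b x) = f (iter_int X f i (iter_int X f b x))"
    using it_succ[OF it_in[OF assms]] by blast
  also have "\<dots> = f (iter_int X f (i+b) x)" using step1 by simp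
  also have "\<dots> = iter_int X f (i+b+1) x" using it_succ[OF assms, of "i+b"] by simp
  finally show ?case by (simp add: algebra_simps)
next
  case (step2 i)
  have "iter_int X f (i-1) (iter_int X f b x) = g (iter_int X f i (iter_int X f b x))"
    using it_pred[OF it_in[OF assms]] by blast
  also have "\<dots> = g (iter_int X f (i+b) x)" using step2 by simp
  also have "\<dots> = iter_int X f (i+b-1) x" using it_pred[OF assms, of "i+b"] by simp
  finally show ?case by (simp add: algebra_simps)
qed

lemma it_mul: assumes "x \<in> S" shows "iter_int X (iter_int X f n) m x = iter_int X f (n*m) x"
proof -
  let ?h = "iter_int X f n"
  have pos: "(?h ^^ j) y = iter_int X f (n * int j) y" if "y \<in> S" for j y
    using that by (induction j) (auto simp: it_zero it_add it_in algebra_simps)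
  have inj: "inj_on ?h S"
    by (rule inj_on_inverseI[where g="iter_int X f (-n)"]) (simp add: it_add it_zero)
  have inv: "inv_into S ?h y = iter_int X f (-n) y" if "y \<in> S" for y
  proof -
    have "?h (iter_int X f (-n) y) = y" using that by (simp add: it_add it_zero)
    then show ?thesis using inv_into_f_f[OF inj it_in[OF that, of "-n"]] by simp
  qed
  have neg: "(inv_into S ?h ^^ j) y = iter_int X f (- n * int j) y" if "y \<in> S" for j y
    using that by (induction j) (auto simp: it_zero it_add it_in inv algebra_simps)
  show ?thesis
  proof (cases "m \<ge> 0")
    case True
    then show ?thesis using pos[OF assms, of "nat m"] by (simp add: iter_int_def)
  next
    case False
    then show ?thesis using neg[OF assms, of "nat (-m)"] by (simp add: iter_int_def)
  qed
qed

lemma g_cont: "continuous_map X X g"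
proof -
  obtain g' where g': "homeomorphic_maps X X f g'" using hm homeomorphic_map_maps by blast
  then have "continuous_map X X g'" by (simp add: homeomorphic_maps_def)
  moreover have "g' x = g x" if x: "x \<in> S" for x
  proof -
    have "g' x \<in> S" "f (g' x) = x" using g' x unfolding homeomorphic_maps_def continuous_map_def by auto
    then show ?thesis using gf by metis
  qed
  ultimately show ?thesis using continuous_map_eq by blast
qed

lemma f_cont: "continuous_map X X f"
  using hm homeomorphic_imp_continuous_map by blast

lemma pow_cont: "continuous_map X X h \<Longrightarrow> continuous_map X X (h ^^ m)"
  by (induction m) (auto intro: continuous_map_compose)

lemma it_cont: "continuous_map X X (iter_int X f k)"
  by (simp add: iter_int_def pow_cont f_cont g_cont)

end


lemma unif_near_compact:
  assumes M: "Metric_space S d" and K: "compactin (Metric_space.mtopology S d) K"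
    and h: "continuous_map (Metric_space.mtopology S d) (Metric_space.mtopology S d) h"
    and c: "c > 0"
  shows "\<exists>\<delta>>0. \<forall>u\<in>K. \<forall>v\<in>S. d u v < \<delta> \<longrightarrow> d (h u) (h v) < c"
proof -
  interpret Metric_space S d by (rule M)
  have KS: "K \<subseteq> S" using K compactin_subset_topspace by fastforce
  have hS: "\<And>x. x \<in> S \<Longrightarrow> h x \<in> S" using h by (auto simp: continuous_map_def)
  have hc: "\<forall>a\<in>S. \<forall>\<epsilon>>0. \<exists>\<delta>>0. \<forall>x. x \<in> S \<and> d a x < \<delta> \<longrightarrow> d (h a) (h x) < \<epsilon>"
    using h unfolding metric_continuous_map[OF M] by blast
  have c2: "c/2 > 0" using c by simp
  have "\<forall>p\<in>K. \<exists>\<eta>>0. \<forall>w. w \<in> S \<and> d p w < \<eta> \<longrightarrow> d (h p) (h w) < c/2"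
  proof
    fix p assume "p \<in> K"
    then have "p \<in> S" using KS by blast
    then show "\<exists>\<eta>>0. \<forall>w. w \<in> S \<and> d p w < \<eta> \<longrightarrow> d (h p) (h w) < c/2"
      using hc c2 by blast
  qed
  then obtain \<eta> where eta: "\<And>p. p \<in> K \<Longrightarrow> \<eta> p > 0 \<and> (\<forall>w. w \<in> S \<and> d p w < \<eta> p \<longrightarrow> d (h p) (h w) < c/2)"
    by metis
  have cov: "K \<subseteq> \<Union> ((\<lambda>p. mball p (\<eta> p / 2)) ` K)"
  proof
    fix p assume "p \<in> K"
    then have "p \<in> mball p (\<eta> p / 2)" using KS eta by auto
    then show "p \<in> \<Union> ((\<lambda>p. mball p (\<eta> p / 2)) ` K)" using \<open>p \<in> K\<close> by blast
  qed
  have op: "\<forall>B\<in>(\<lambda>p. mball p (\<eta> p / 2)) ` K. openin mtopology B" by auto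
  have "\<exists>F. finite F \<and> F \<subseteq> (\<lambda>p. mball p (\<eta> p / 2)) ` K \<and> K \<subseteq> \<Union>F"
    using K cov op unfolding compactin_def by blast
  then obtain F where F: "finite F" "F \<subseteq> (\<lambda>p. mball p (\<eta> p / 2)) ` K" "K \<subseteq> \<Union>F"
    by blast
  obtain P where P: "P \<subseteq> K" "finite P" "F = (\<lambda>p. mball p (\<eta> p / 2)) ` P"
    using finite_subset_image[OF F(1) F(2)] by blast
  show ?thesis
  proof (cases "P = {}")
    case True
    then have "K = {}" using P F by auto
    then show ?thesis by (intro exI[of _ 1]) auto
  next
    case False
    define \<delta> where "\<delta> = Min ((\<lambda>p. \<eta> p / 2) ` P)"
    have dpos: "\<delta> > 0" unfolding \<delta>_def using P False eta by (subst Min_gr_iff) auto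
    have dle: "\<And>p. p \<in> P \<Longrightarrow> \<delta> \<le> \<eta> p / 2" unfolding \<delta>_def using P by (intro Min.coboundedI) auto
    show ?thesis
    proof (intro exI[of _ \<delta>] conjI dpos ballI impI)
      fix u v assume u: "u \<in> K" and v: "v \<in> S" and duv: "d u v < \<delta>"
      obtain p where p: "p \<in> P" "u \<in> mball p (\<eta> p / 2)" using u F P by auto
      have pK: "p \<in> K" "p \<in> S" using p P KS by auto
      have uS: "u \<in> S" using u KS by auto
      have "d p v \<le> d p u + d u v" using triangle[of p u v] pK uS v by simp
      also have "\<dots> < \<eta> p" using p dle[OF p(1)] duv by simp
      finally have 1: "d (h p) (h v) < c/2" using eta pK v by blast
      have "d p u < \<eta> p / 2" using p(2) by simp
      then have "d p u < \<eta> p" using nonneg[of p u] by linarith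
      then have 2: "d (h p) (h u) < c/2" using eta pK uS by blast
      have "d (h u) (h v) \<le> d (h u) (h p) + d (h p) (h v)" using triangle[of "h u" "h p" "h v"] hS[of u] hS[of p] hS[of v] pK uS v by simp
      then show "d (h u) (h v) < c" using 1 2 commute[of "h u" "h p"] by linarith
    qed
  qed
qed



lemma psi_exists:
  assumes M: "Metric_space S d" and X: "X = Metric_space.mtopology S d"
    and lc: "locally_compact_space X" and sc: "sigma_compact_space X"
  shows "\<exists>\<psi>. (\<forall>x. \<psi> x \<ge> 0) \<and> (\<forall>x\<in>S. \<psi> x > 0) \<and> (\<forall>x\<in>S. \<forall>y\<in>S. \<psi> x \<le> \<psi> y + d x y)
          \<and> (\<forall>c>0. \<exists>L. compactin X L \<and> (\<forall>x\<in>S. \<psi> x \<ge> c \<longrightarrow> x \<in> L))"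
proof (cases "S = {}")
  case True
  then show ?thesis by (intro exI[of _ "\<lambda>_. 1"]) auto
next
  case False
  interpret Metric_space S d by (rule M)
  have tS: "topspace X = S" using X by simp
  obtain F where F: "countable F" "\<forall>K\<in>F. compactin X K" "\<Union>F = S"
    using sc tS unfolding sigma_compact_space_def by auto
  have Fne: "F \<noteq> {}" using F False by auto
  define K where "K = from_nat_into F"
  have rK: "range K = F" using Fne F by (simp add: K_def)
  have Kc: "\<And>j. compactin X (K j)" using rK F by auto
  have Haus: "Hausdorff_space X" using X Hausdorff_space_mtopology by simp
  have "\<forall>j. \<exists>U L. openin X U \<and> compactin X L \<and> K j \<subseteq> U \<and> U \<subseteq> L"
    using lc Kc locally_compact_space_compact_closed_compact[of X] Haus by meson
  then obtain U L where UL: "\<And>j. openin X (U j) \<and> compactin X (L j) \<and> K j \<subseteq> U j \<and> U j \<subseteq> L j"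
    by metis
  define \<theta> where "\<theta> j x = Inf (insert 1 ((\<lambda>z. d x z) ` (S - U j)))" for j x
  have bb: "bdd_below (insert 1 ((\<lambda>z. d x z) ` (S - U j)))" for j x
    by (rule bdd_belowI[of _ 0]) auto
  have th0: "0 \<le> \<theta> j x" for j x
    unfolding \<theta>_def by (rule cInf_greatest) auto
  have th1: "\<theta> j x \<le> 1" for j x
    unfolding \<theta>_def using bb by (intro cInf_lower) auto
  have thz: "\<theta> j x \<le> d x z" if "z \<in> S - U j" for j x z
    unfolding \<theta>_def using bb that by (intro cInf_lower) auto
  have thL: "\<theta> j x \<le> \<theta> j y + d x y" if "x \<in> S" "y \<in> S" for j x y
  proof -
    have "\<theta> j x - d x y \<le> \<theta> j y"
      unfolding \<theta>_def[of j y]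
    proof (rule cInf_greatest)
      fix w assume "w \<in> insert 1 ((\<lambda>z. d y z) ` (S - U j))"
      then show "\<theta> j x - d x y \<le> w"
      proof
        assume "w = 1" then show ?thesis using th1[of j x] nonneg[of x y] by linarith
      next
        assume "w \<in> (\<lambda>z. d y z) ` (S - U j)"
        then obtain z where z: "z \<in> S - U j" "w = d y z" by auto
        have "d x z \<le> d x y + d y z" using triangle that z by blast
        then show ?thesis using thz[OF z(1), of x] z by linarith
      qed
    qed auto
    then show ?thesis by linarith
  qed
  have thpos: "\<theta> j x > 0" if xU: "x \<in> U j" for j x
  proof -
    have "openin mtopology (U j)" using UL X by simp
    then obtain r where r: "r > 0" "mball x r \<subseteq> U j" using xU unfolding openin_mtopology by meson
    have "min 1 r \<le> \<theta> j x" unfolding \<theta>_def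
    proof (rule cInf_greatest)
      fix w assume "w \<in> insert 1 ((\<lambda>z. d x z) ` (S - U j))"
      then show "min 1 r \<le> w"
      proof
        assume "w \<in> (\<lambda>z. d x z) ` (S - U j)"
        then obtain z where z: "z \<in> S - U j" "w = d x z" by auto
        have "x \<in> S" using xU UL X openin_subset by fastforce
        then have "\<not> d x z < r" using r z by auto
        then show ?thesis using z by simp
      qed simp
    qed auto
    then show ?thesis using r by simp
  qed
  define \<psi> where "\<psi> x = (SUP j. \<theta> j x / 2^j)" for x
  have bda: "bdd_above (range (\<lambda>j. \<theta> j x / 2^j))" for x
  proof (rule bdd_aboveI[of _ 1])
    fix w assume "w \<in> range (\<lambda>j. \<theta> j x / 2^j)"
    then obtain j where "w = \<theta> j x / 2^j" by auto
    moreover have "\<theta> j x / 2^j \<le> 1 / 1"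
      using th0 th1 by (intro frac_le) auto
    ultimately show "w \<le> 1" by simp
  qed
  have psu: "\<theta> j x / 2^j \<le> \<psi> x" for j x
    unfolding \<psi>_def using bda[of x] by (intro cSUP_upper) auto
  have p0: "\<psi> x \<ge> 0" for x using psu[of 0 x] th0[of 0 x] by simp
  have ppos: "\<psi> x > 0" if xS: "x \<in> S" for x
  proof -
    obtain j where "x \<in> K j" using xS F rK by blast
    then have "\<theta> j x > 0" using UL thpos by blast
    then show ?thesis using psu[of j x] by (smt (verit) divide_pos_pos zero_less_power)
  qed
  have pL: "\<psi> x \<le> \<psi> y + d x y" if "x \<in> S" "y \<in> S" for x y
    unfolding \<psi>_def[of x]
  proof (rule cSUP_least)
    fix j
    have "\<theta> j x / 2^j \<le> (\<theta> j y + d x y) / 2^j" using thL[OF that] by (simp add: divide_right_mono)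
    also have "\<dots> = \<theta> j y / 2^j + d x y / 2^j" by (simp add: add_divide_distrib)
    also have "d x y / 2^j \<le> d x y"
      using divide_left_mono[of 1 "2^j" "d x y"] by simp
    then have "\<theta> j y / 2^j + d x y / 2^j \<le> \<psi> y + d x y" using psu[of j y] by linarith
    finally show "\<theta> j x / 2^j \<le> \<psi> y + d x y" .
  qed simp
  have pvan: "\<exists>L'. compactin X L' \<and> (\<forall>x\<in>S. \<psi> x \<ge> c \<longrightarrow> x \<in> L')" if c: "c > 0" for c
  proof -
    obtain m where m: "(1/2::real)^m < c" using real_arch_pow_inv[OF c, of "1/2"] by auto
    define L' where "L' = \<Union> (L ` {..<m})"
    have "compactin X L'" unfolding L'_def using UL by (intro compactin_Union) auto
    moreover have "x \<in> L'" if x: "x \<in> S" "\<psi> x \<ge> c" for x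
    proof (rule ccontr)
      assume nx: "x \<notin> L'"
      have "\<psi> x \<le> (1/2)^m" unfolding \<psi>_def
      proof (rule cSUP_least)
        fix j
        show "\<theta> j x / 2^j \<le> (1/2)^m"
        proof (cases "j < m")
          case True
          then have "x \<notin> U j" using nx UL unfolding L'_def by blast
          then have "\<theta> j x = 0" using thz[of x j x] x th0[of j x] by simp
          then show ?thesis by simp
        next
          case False
          have "\<theta> j x / 2^j \<le> 1 / 2^j" using th1 by (simp add: divide_right_mono)
          also have "\<dots> = (1/2)^j" by (simp add: power_divide)
          also have "\<dots> \<le> (1/2)^m" using False by (intro power_decreasing) auto
          finally show ?thesis .
        qed
      qed simp
      then show False using m x by linarith
    qed
    ultimately show ?thesis by blast
  qed
  show ?thesis
    by (intro exI[of _ \<psi>] conjI allI ballI impI p0 ppos pL pvan) auto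
qed



lemma rho_compatible:
  assumes M: "Metric_space S d"
    and p0: "\<forall>x. \<psi> x \<ge> 0" and ppos: "\<forall>x\<in>S. \<psi> x > 0"
    and pL: "\<forall>x\<in>S. \<forall>y\<in>S. \<psi> x \<le> \<psi> y + d x y"
  shows "Metric_space S (\<lambda>x y. min (d x y) (\<psi> x + \<psi> y))"
    and "Metric_space.mtopology S (\<lambda>x y. min (d x y) (\<psi> x + \<psi> y)) = Metric_space.mtopology S d"
proof -
  interpret Metric_space S d by (rule M)
  show R: "Metric_space S (\<lambda>x y. min (d x y) (\<psi> x + \<psi> y))"
  proof
    fix x y z assume xyz: "x \<in> S" "y \<in> S" "z \<in> S"
    have "d x z \<le> d x y + d y z" using triangle[of x y z] xyz by simp
    moreover have "\<psi> z \<le> \<psi> y + d z y" using pL xyz by blast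
    then have "\<psi> z \<le> \<psi> y + d y z" using commute[of z y] by simp
    moreover have "\<psi> x \<le> \<psi> y + d x y" using pL xyz by blast
    moreover have "\<psi> y \<ge> 0" using spec[OF p0, of y] by simp
    ultimately show "min (d x z) (\<psi> x + \<psi> z) \<le> min (d x y) (\<psi> x + \<psi> y) + min (d y z) (\<psi> y + \<psi> z)"
      by (simp add: min_def)
  next
    fix x y assume xy: "x \<in> S" "y \<in> S"
    then have "\<psi> x > 0" "\<psi> y > 0" using ppos by auto
    moreover have "d x y \<ge> 0" by simp
    moreover have "d x y = 0 \<longleftrightarrow> x = y" using zero xy by blast
    ultimately show "(min (d x y) (\<psi> x + \<psi> y) = 0) = (x = y)"
      by (auto simp: min_def)
  qed (auto simp: commute p0 add.commute add_nonneg_nonneg)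
  interpret R: Metric_space S "\<lambda>x y. min (d x y) (\<psi> x + \<psi> y)" by (rule R)
  show "R.mtopology = mtopology"
  proof (rule topology_eq[THEN iffD2], intro allI iffI)
    fix U assume U: "openin R.mtopology U"
    have sub: "mball x r \<subseteq> R.mball x r" for x r
    proof
      fix y assume "y \<in> mball x r"
      then have "x \<in> S" "y \<in> S" "d x y < r" by auto
      then show "y \<in> R.mball x r" by simp
    qed
    show "openin mtopology U" unfolding openin_mtopology
    proof (intro conjI allI impI)
      show "U \<subseteq> S" using U R.openin_mtopology by blast
      fix x assume "x \<in> U"
      then obtain r where "r > 0" "R.mball x r \<subseteq> U" using U unfolding R.openin_mtopology by meson
      then show "\<exists>r>0. mball x r \<subseteq> U" using sub by blast
    qed
  next
    fix U assume U: "openin mtopology U"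
    show "openin R.mtopology U" unfolding R.openin_mtopology
    proof (intro conjI allI impI)
      show "U \<subseteq> S" using U openin_mtopology by blast
      fix x assume x: "x \<in> U"
      then obtain r where r: "r > 0" "mball x r \<subseteq> U" using U unfolding openin_mtopology by meson
      have xS: "x \<in> S" using x U openin_mtopology by blast
      show "\<exists>r>0. R.mball x r \<subseteq> U"
      proof (intro exI[of _ "min r (\<psi> x)"] conjI subsetI)
        show "0 < min r (\<psi> x)" using r ppos xS by simp
        fix y assume "y \<in> R.mball x (min r (\<psi> x))"
        then have y: "y \<in> S" "min (d x y) (\<psi> x + \<psi> y) < min r (\<psi> x)" by auto
        moreover have "\<psi> y \<ge> 0" using spec[OF p0, of y] by simp
        ultimately have "d x y < r" by (auto simp: min_def split: if_splits)
        then show "y \<in> U" using r y xS by auto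
      qed
    qed
  qed
qed

lemma finite_delta:
  fixes P :: "'b \<Rightarrow> real \<Rightarrow> bool"
  assumes "finite R" "\<forall>r\<in>R. \<exists>\<delta>>0. P r \<delta>" "\<And>r \<delta> \<delta>'. P r \<delta> \<Longrightarrow> 0 < \<delta>' \<Longrightarrow> \<delta>' \<le> \<delta> \<Longrightarrow> P r \<delta>'"
  shows "\<exists>\<delta>>0. \<forall>r\<in>R. P r \<delta>"
  using assms(1,2)
proof (induction R rule: finite_induct)
  case empty
  show ?case by (rule exI[of _ 1]) simp
next
  case (insert a F)
  then obtain \<delta>1 where d1: "\<delta>1 > 0" "\<forall>r\<in>F. P r \<delta>1" by auto
  obtain \<delta>2 where d2: "\<delta>2 > 0" "P a \<delta>2" using insert by auto
  show ?case
    by (intro exI[of _ "min \<delta>1 \<delta>2"]) (use d1 d2 assms(3) in auto)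
qed

theorem mainTheorem8:
  fixes X :: "'a topology" and f :: "'a \<Rightarrow> 'a" and n :: int
  assumes "metrizable_space X"
    and "locally_compact_space X"
    and "sigma_compact_space X"
    and "homeomorphic_map X X f"
    and "metric_independent_expansive X f"
    and "n \<noteq> 0"
  shows "metric_independent_expansive X (iter_int X f n)"
  unfolding metric_independent_expansive_def
proof (intro allI impI)
  fix d assume cd: "compatible_metric X d"
  interpret homeo_ctx X f using assms(4) by unfold_locales
  have M: "Metric_space S d" and XM: "Metric_space.mtopology S d = X"
    using cd unfolding compatible_metric_def by auto
  interpret Metric_space S d by (rule M)
  obtain \<psi> where p0: "\<forall>x. \<psi> x \<ge> 0" and ppos: "\<forall>x\<in>S. \<psi> x > 0"
    and pL: "\<forall>x\<in>S. \<forall>y\<in>S. \<psi> x \<le> \<psi> y + d x y"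
    and pv: "\<forall>c>0. \<exists>L. compactin X L \<and> (\<forall>x\<in>S. \<psi> x \<ge> c \<longrightarrow> x \<in> L)"
    using psi_exists[OF M XM[symmetric] assms(2,3)] by blast
  define \<rho> where "\<rho> = (\<lambda>x y. min (d x y) (\<psi> x + \<psi> y))"
  have "compatible_metric X \<rho>"
    unfolding compatible_metric_def \<rho>_def using rho_compatible[OF M p0 ppos pL] XM by simp
  then have "expansive_wrt X f \<rho>" using assms(5) unfolding metric_independent_expansive_def by blast
  then obtain c where c: "c > 0" and H: "\<forall>x\<in>S. \<forall>y\<in>S. x \<noteq> y \<longrightarrow>
        (\<exists>i::int. \<rho> (iter_int X f i x) (iter_int X f i y) > c)"
    unfolding expansive_wrt_def by blast
  have unif: "\<exists>\<delta>>0. \<forall>u\<in>S. \<forall>v\<in>S. d u v < \<delta> \<longrightarrow> \<rho> (iter_int X f r u) (iter_int X f r v) \<le> c" for r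
  proof -
    obtain L where L: "compactin X L" "\<forall>x\<in>S. \<psi> x \<ge> c/2 \<longrightarrow> x \<in> L" using pv c by (meson half_gt_zero)
    define K where "K = iter_int X f (-r) ` L"
    have K: "compactin X K" unfolding K_def using L it_cont by (intro image_compactin) auto
    obtain \<delta> where \<delta>: "\<delta> > 0" "\<forall>u\<in>K. \<forall>v\<in>S. d u v < \<delta> \<longrightarrow> d (iter_int X f r u) (iter_int X f r v) < c"
      using unif_near_compact[OF M, of K "iter_int X f r" c] K it_cont c XM by auto
    have bk: "u \<in> K" if "u \<in> S" "iter_int X f r u \<in> L" for u
    proof -
      have "u = iter_int X f (-r) (iter_int X f r u)" using it_add[OF that(1)] it_zero by simp
      then show ?thesis unfolding K_def using that by blast
    qed
    show ?thesis
    proof (intro exI[of _ \<delta>] conjI \<delta>(1) ballI impI)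
      fix u v assume u: "u \<in> S" and v: "v \<in> S" and duv: "d u v < \<delta>"
      show "\<rho> (iter_int X f r u) (iter_int X f r v) \<le> c"
      proof (cases "iter_int X f r u \<in> L \<or> iter_int X f r v \<in> L")
        case True
        then have "d (iter_int X f r u) (iter_int X f r v) < c"
        proof
          assume "iter_int X f r u \<in> L"
          then show ?thesis using \<delta>(2) bk[OF u] v duv by blast
        next
          assume "iter_int X f r v \<in> L"
          moreover have "d v u < \<delta>" using duv commute[of v u] by simp
          ultimately have "d (iter_int X f r v) (iter_int X f r u) < c" using \<delta>(2) bk[OF v] u by blast
          then show ?thesis using commute[of "iter_int X f r v"] by simp
        qed
        then show ?thesis unfolding \<rho>_def by simp
      next
        case False
        then have "\<psi> (iter_int X f r u) < c/2" "\<psi> (iter_int X f r v) < c/2"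
          using L it_in u v by (meson not_less)+
        then show ?thesis unfolding \<rho>_def by simp
      qed
    qed
  qed
  define R where "R = {-\<bar>n\<bar><..<\<bar>n\<bar>}"
  define P where "P = (\<lambda>r \<delta>. \<forall>u\<in>S. \<forall>v\<in>S. d u v < \<delta> \<longrightarrow>
        \<rho> (iter_int X f r u) (iter_int X f r v) \<le> c)"
  have "\<exists>\<delta>>0. \<forall>r\<in>R. P r \<delta>"
  proof (rule finite_delta[where P=P])
    show "finite R" unfolding R_def by simp
    show "\<forall>r\<in>R. \<exists>\<delta>>0. P r \<delta>" unfolding P_def using unif by blast
    fix r \<delta> \<delta>' assume "P r \<delta>" "0 < \<delta>'" "\<delta>' \<le> \<delta>"
    then show "P r \<delta>'" unfolding P_def by (meson less_le_trans)
  qed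
  then obtain \<delta> where \<delta>: "\<delta> > 0" and D: "\<forall>r\<in>R. P r \<delta>" by blast
  show "expansive_wrt X (iter_int X f n) d"
    unfolding expansive_wrt_def
  proof (intro exI[of _ "\<delta>/2"] conjI ballI impI)
    show "\<delta>/2 > 0" using \<delta> by simp
    fix x y assume x: "x \<in> S" and y: "y \<in> S" and xy: "x \<noteq> y"
    obtain i where i: "\<rho> (iter_int X f i x) (iter_int X f i y) > c" using H x y xy by blast
    define m where "m = i div n"
    define r where "r = i mod n"
    have ir: "i = r + n * m" unfolding m_def r_def by simp
    have rR: "r \<in> R"
    proof (cases "n > 0")
      case True
      have "0 \<le> i mod n" "i mod n < n" using True by simp_all
      then have "-\<bar>n\<bar> < i mod n" "i mod n < \<bar>n\<bar>" using True by linarith+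
      then show ?thesis unfolding r_def R_def by simp
    next
      case False
      then have n0: "n < 0" using assms(6) by simp
      have "i mod n \<le> 0" "n < i mod n" using n0 by simp_all
      then have "-\<bar>n\<bar> < i mod n" "i mod n < \<bar>n\<bar>" using n0 by linarith+
      then show ?thesis unfolding r_def R_def by simp
    qed
    let ?u = "iter_int X f (n*m) x" and ?v = "iter_int X f (n*m) y"
    have "iter_int X f i x = iter_int X f r ?u" "iter_int X f i y = iter_int X f r ?v"
      using it_add x y ir by auto
    moreover have "?u \<in> S" "?v \<in> S" using it_in x y by auto
    moreover have "P r \<delta>" using D rR by blast
    ultimately have "\<not> d ?u ?v < \<delta>" using i unfolding P_def by force
    then have "d ?u ?v > \<delta>/2" using \<delta> by simp
    then show "\<exists>k::int. d (iter_int X (iter_int X f n) k x) (iter_int X (iter_int X f n) k y) > \<delta>/2"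
      using it_mul[OF x, of n m] it_mul[OF y, of n m] by (intro exI[of _ m]) simp
  qed
qed


end
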